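(* Let $\gamma>0$, $v\in[0,1]^N$, $r\in[0,1]^N$, and let $$q\in\arg\max_{\rho\in\Delta(\mathcal{S})}\;\mathbb{E}_{S\sim\rho}[R(S,v,r)]-\frac{(K+1)^4}{\gamma}\sum_{i=1}^N\log\frac{1}{w_i(\rho)}.$$ Then there is an absolute constant $C>0$ (independent of $N,K,\gamma,v,r$) such that $\mathsf{dec}_\gamma(q;v,r)\le \frac{C\,NK^4}{\gamma}$.
   Context: $N\ge K\ge1$ are integers and $\mathcal{S}$ is the collection of subsets $S\subseteq[N]$ with $1\le|S|\le K$; $\Delta(\mathcal{S})$ is the set of probability distributions on $\mathcal{S}$. For $S\in\mathcal{S}$ and $v\in[0,1]^N$, $\mu(S,v)\in\mathbb{R}^{N+1}$ is the distribution on $\{0,\dots,N\}$ with $\mu_i(S,v)=\frac{v_i}{1+\sum_{j\in S}v_j}$ for $i\in S$, $\mu_0(S,v)=\frac{1}{1+\sum_{j\in S}v_j}$, and $\mu_i(S,v)=0$ otherwise. $R(S,v,r)=\frac{\sum_{i\in S}r_iv_i}{1+\sum_{i\in S}v_i}$. For $\rho\in\Delta(\mathcal{S})$, $w_i(\rho)=\sum_{S\ni i}\rho(S)$. The Decision-Estimation Coefficient of $q\in\Delta(\mathcal{S})$ is $$\mathsf{dec}_\gamma(q;v,r)=\max_{v^\star\in[0,1]^N}\max_{S^\star\in\mathcal{S}}\Big\{R(S^\star,v^\star,r)-\mathbb{E}_{S\sim q}[R(S,v^\star,r)]-\gamma\,\mathbb{E}_{S\sim q}\big[\|\mu(S,v)-\mu(S,v^\star)\|_2^2\big]\Big\}.$$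 *)

theory Defs
  imports Complex_Main
begin

text \<open>Ground set [N] = {1..N}; item 0 is the no-purchase option.\<close>

definition assortments :: "nat \<Rightarrow> nat \<Rightarrow> nat set set" where
  "assortments N K = {S. S \<subseteq> {1..N} \<and> 1 \<le> card S \<and> card S \<le> K}"

definition dists :: "nat \<Rightarrow> nat \<Rightarrow> (nat set \<Rightarrow> real) set" where
  "dists N K = {\<rho>. (\<forall>S. \<rho> S \<ge> 0) \<and> (\<forall>S. S \<notin> assortments N K \<longrightarrow> \<rho> S = 0)
                   \<and> (\<Sum>S\<in>assortments N K. \<rho> S) = 1}"

definition expect :: "nat \<Rightarrow> nat \<Rightarrow> (nat set \<Rightarrow> real) \<Rightarrow> (nat set \<Rightarrow> real) \<Rightarrow> real" where
  "expect N K \<rho> f = (\<Sum>S\<in>assortments N K. \<rho> S * f S)"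

definition cube :: "nat \<Rightarrow> (nat \<Rightarrow> real) set" where
  "cube N = {v. \<forall>i\<in>{1..N}. 0 \<le> v i \<and> v i \<le> 1}"

definition mnl_mu :: "nat set \<Rightarrow> (nat \<Rightarrow> real) \<Rightarrow> nat \<Rightarrow> real" where
  "mnl_mu S v i = (if i = 0 then 1 / (1 + (\<Sum>j\<in>S. v j))
                   else if i \<in> S then v i / (1 + (\<Sum>j\<in>S. v j)) else 0)"

definition mnl_R :: "nat set \<Rightarrow> (nat \<Rightarrow> real) \<Rightarrow> (nat \<Rightarrow> real) \<Rightarrow> real" where
  "mnl_R S v r = (\<Sum>i\<in>S. r i * v i) / (1 + (\<Sum>i\<in>S. v i))"

definition mu_dist2 :: "nat \<Rightarrow> nat set \<Rightarrow> (nat \<Rightarrow> real) \<Rightarrow> (nat \<Rightarrow> real) \<Rightarrow> real" where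
  "mu_dist2 N S v v' = (\<Sum>i\<in>{0..N}. (mnl_mu S v i - mnl_mu S v' i)\<^sup>2)"

definition wt :: "nat \<Rightarrow> nat \<Rightarrow> (nat set \<Rightarrow> real) \<Rightarrow> nat \<Rightarrow> real" where
  "wt N K \<rho> i = (\<Sum>S\<in>{S\<in>assortments N K. i \<in> S}. \<rho> S)"

text \<open>Objective E_rho[R(S,v,r)] - (K+1)^4/gamma * sum_i log(1/w_i(rho)); it equals -infinity
  when some w_i(rho) = 0, so it is only evaluated at rho with all w_i(rho) > 0.\<close>
definition objective :: "nat \<Rightarrow> nat \<Rightarrow> real \<Rightarrow> (nat \<Rightarrow> real) \<Rightarrow> (nat \<Rightarrow> real) \<Rightarrow> (nat set \<Rightarrow> real) \<Rightarrow> real" where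
  "objective N K \<gamma> v r \<rho> = expect N K \<rho> (\<lambda>S. mnl_R S v r)
     - (real (K + 1))^4 / \<gamma> * (\<Sum>i\<in>{1..N}. ln (1 / wt N K \<rho> i))"

definition is_argmax :: "nat \<Rightarrow> nat \<Rightarrow> real \<Rightarrow> (nat \<Rightarrow> real) \<Rightarrow> (nat \<Rightarrow> real) \<Rightarrow> (nat set \<Rightarrow> real) \<Rightarrow> bool" where
  "is_argmax N K \<gamma> v r q \<longleftrightarrow> q \<in> dists N K \<and> (\<forall>i\<in>{1..N}. wt N K q i > 0) \<and>
     (\<forall>\<rho>\<in>dists N K. (\<forall>i\<in>{1..N}. wt N K \<rho> i > 0) \<longrightarrow>
        objective N K \<gamma> v r \<rho> \<le> objective N K \<gamma> v r q)"

definition dec :: "nat \<Rightarrow> nat \<Rightarrow> real \<Rightarrow> (nat set \<Rightarrow> real) \<Rightarrow> (nat \<Rightarrow> real) \<Rightarrow> (nat \<Rightarrow> real) \<Rightarrow> real" where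
  "dec N K \<gamma> q v r = (SUP p \<in> cube N \<times> assortments N K.
      mnl_R (snd p) (fst p) r - expect N K q (\<lambda>S. mnl_R S (fst p) r)
      - \<gamma> * expect N K q (\<lambda>S. mu_dist2 N S v (fst p)))"

end

theory Submission
  imports Defs
begin

lemma finite_assort: "finite (assortments N K)"
proof -
  have "assortments N K \<subseteq> Pow {1..N}" by (auto simp: assortments_def)
  thus ?thesis by (rule finite_subset) simp
qed

lemma assort_facts:
  assumes "S \<in> assortments N K"
  shows "S \<subseteq> {1..N}" "finite S" "card S \<le> K" "S \<noteq> {}" "0 \<notin> S"
proof -
  show s: "S \<subseteq> {1..N}" using assms by (auto simp: assortments_def)
  show f: "finite S" using s finite_subset by blast
  show "card S \<le> K" using assms by (auto simp: assortments_def)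
  show "S \<noteq> {}" using assms by (auto simp: assortments_def)
  show "0 \<notin> S" using s by auto
qed

lemma R_lip:
  assumes "finite S" "\<forall>i\<in>S. 0 \<le> v i \<and> 0 \<le> v' i \<and> 0 \<le> r i \<and> r i \<le> 1"
  shows "mnl_R S v' r - mnl_R S v r \<le> (\<Sum>i\<in>S. \<bar>v' i - v i\<bar>)"
proof -
  define B where "B = (\<Sum>i\<in>S. v i)"
  define B' where "B' = (\<Sum>i\<in>S. v' i)"
  define A where "A = (\<Sum>i\<in>S. r i * v i)"
  define A' where "A' = (\<Sum>i\<in>S. r i * v' i)"
  define R where "R = A / (1 + B)"
  have B0: "B \<ge> 0" unfolding B_def using assms by (auto intro: sum_nonneg)
  have B'0: "B' \<ge> 0" unfolding B'_def using assms by (auto intro: sum_nonneg)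
  have A0: "A \<ge> 0" unfolding A_def using assms by (auto intro: sum_nonneg)
  have AB: "A \<le> B" unfolding A_def B_def using assms
    by (intro sum_mono) (auto simp: mult_left_le_one_le)
  have R0: "0 \<le> R" "R \<le> 1" unfolding R_def using A0 AB B0 by auto
  have RB: "R * (1 + B) = A" unfolding R_def using B0 by simp
  have eq: "mnl_R S v' r - mnl_R S v r = (A' - A - R * (B' - B)) / (1 + B')"
  proof -
    have "mnl_R S v' r - mnl_R S v r = A' / (1 + B') - R"
      unfolding mnl_R_def A_def[symmetric] A'_def[symmetric] B_def[symmetric] B'_def[symmetric] R_def ..
    also have "\<dots> = (A' - R * (1 + B')) / (1 + B')" using B'0 by (simp add: field_simps)
    also have "R * (1 + B') = A + R * (B' - B)" using RB by (simp add: algebra_simps)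
    finally show ?thesis by (simp add: algebra_simps)
  qed
  have num: "A' - A - R * (B' - B) = (\<Sum>i\<in>S. (r i - R) * (v' i - v i))"
    unfolding A_def A'_def B_def B'_def
    by (simp add: sum_subtractf[symmetric] sum_distrib_left algebra_simps)
  have "(\<Sum>i\<in>S. (r i - R) * (v' i - v i)) \<le> (\<Sum>i\<in>S. \<bar>v' i - v i\<bar>)"
  proof (rule sum_mono)
    fix i assume "i \<in> S"
    hence "\<bar>r i - R\<bar> \<le> 1" using assms R0 by auto
    hence "(r i - R) * (v' i - v i) \<le> \<bar>r i - R\<bar> * \<bar>v' i - v i\<bar>"
      by (metis abs_ge_self abs_mult)
    also have "\<dots> \<le> 1 * \<bar>v' i - v i\<bar>" using \<open>\<bar>r i - R\<bar> \<le> 1\<close>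
      by (intro mult_right_mono) auto
    finally show "(r i - R) * (v' i - v i) \<le> \<bar>v' i - v i\<bar>" by simp
  qed
  hence X: "A' - A - R * (B' - B) \<le> (\<Sum>i\<in>S. \<bar>v' i - v i\<bar>)" using num by simp
  have Y: "(\<Sum>i\<in>S. \<bar>v' i - v i\<bar>) \<ge> 0" by (auto intro: sum_nonneg)
  show ?thesis
  proof (cases "A' - A - R * (B' - B) \<le> 0")
    case True
    have "(A' - A - R * (B' - B)) / (1 + B') \<le> 0" using True B'0 by (intro divide_nonpos_pos) auto
    thus ?thesis using eq Y by linarith
  next
    case False
    hence "(A' - A - R * (B' - B)) / (1 + B') \<le> A' - A - R * (B' - B)"
      using B'0 by (simp add: divide_le_eq)
    thus ?thesis using eq X by linarith
  qed
qed

lemma dv_generic: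
  fixes x y b b' k :: real
  assumes "1 \<le> b" "b \<le> k" "1 \<le> b'" "0 \<le> y" "y \<le> 1"
  shows "(x - y)^2 \<le> 2 * k^2 * ((x/b - y/b')^2 + (1/b - 1/b')^2)"
proof -
  define p where "p = x/b - y/b'"
  define s where "s = 1/b - 1/b'"
  have e: "x - y = b * p - y * b * s" unfolding p_def s_def using assms
    by (simp add: field_simps)
  have "\<bar>x - y\<bar> \<le> \<bar>b * p\<bar> + \<bar>y * b * s\<bar>" unfolding e by (rule abs_triangle_ineq4)
  also have "\<bar>b * p\<bar> + \<bar>y * b * s\<bar> = b * \<bar>p\<bar> + y * b * \<bar>s\<bar>" using assms
    by (simp add: abs_mult)
  also have "\<dots> \<le> k * \<bar>p\<bar> + k * \<bar>s\<bar>"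
  proof -
    have "b * \<bar>p\<bar> \<le> k * \<bar>p\<bar>" using assms by (intro mult_right_mono) auto
    moreover have "y * b * \<bar>s\<bar> \<le> 1 * k * \<bar>s\<bar>" using assms
      by (intro mult_right_mono mult_mono) auto
    ultimately show ?thesis by simp
  qed
  finally have h: "\<bar>x - y\<bar> \<le> k * (\<bar>p\<bar> + \<bar>s\<bar>)" by (simp add: algebra_simps)
  have "(x - y)^2 = \<bar>x - y\<bar>^2" by simp
  also have "\<dots> \<le> (k * (\<bar>p\<bar> + \<bar>s\<bar>))^2" using h by (intro power_mono) auto
  also have "\<dots> = k^2 * (\<bar>p\<bar> + \<bar>s\<bar>)^2" by (simp add: power_mult_distrib)
  also have "\<dots> \<le> k^2 * (2 * (p^2 + s^2))"
  proof (intro mult_left_mono)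
    have "0 \<le> (\<bar>p\<bar> - \<bar>s\<bar>)^2" by simp
    thus "(\<bar>p\<bar> + \<bar>s\<bar>)^2 \<le> 2 * (p^2 + s^2)" by (simp add: power2_eq_square algebra_simps)
  qed simp
  finally show ?thesis unfolding p_def s_def by (simp add: algebra_simps)
qed

lemma ln_step1:
  fixes w t :: real
  assumes "0 < w" "w \<le> 1" "0 < t" "t \<le> w/4"
  shows "ln ((1-t)*w + t) - ln w \<ge> t/(2*w) - 2*t"
proof -
  define x where "x = t*(1-w)/w"
  have x0: "0 \<le> x" unfolding x_def using assms by auto
  have x1: "x \<le> 1/4"
  proof -
    have "t*(1-w) \<le> t" using assms by (simp add: algebra_simps)
    hence "x \<le> t / w" unfolding x_def using assms by (simp add: divide_right_mono)
    also have "t / w \<le> 1/4" using assms by (simp add: divide_le_eq)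
    finally show ?thesis .
  qed
  have eq: "(1-t)*w + t = w * (1 + x)" unfolding x_def using assms by (simp add: field_simps)
  have "ln ((1-t)*w + t) - ln w = ln (1 + x)" unfolding eq using assms x0 by (simp add: ln_mult)
  also have "\<dots> \<ge> x - x^2" using ln_one_plus_pos_lower_bound[of x] x0 x1 by simp
  finally have "ln ((1-t)*w + t) - ln w \<ge> x - x^2" .
  moreover have "x - x^2 \<ge> x/2"
  proof -
    have "x * (2*x) \<le> x * 1" using x0 x1 by (intro mult_left_mono) auto
    thus ?thesis by (simp add: power2_eq_square)
  qed
  moreover have "x/2 = t/(2*w) - t/2" unfolding x_def using assms by (simp add: field_simps)
  ultimately show ?thesis using assms by linarith
qed

lemma ln_step2:
  fixes w t :: real
  assumes "0 < w" "0 < t" "t \<le> 1/4"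
  shows "ln ((1-t)*w) - ln w \<ge> - 2*t"
proof -
  have "ln ((1-t)*w) - ln w = ln (1 - t)" using assms by (simp add: ln_mult)
  moreover have "ln (1-t) \<ge> -t - 2*t^2" using ln_one_minus_pos_lower_bound[of t] assms by simp
  moreover have "2*t^2 \<le> t" using assms by (simp add: power2_eq_square)
  ultimately show ?thesis by linarith
qed


lemma sum_v_bound:
  assumes "S \<in> assortments N K" "v \<in> cube N"
  shows "0 \<le> (\<Sum>j\<in>S. v j)" "(\<Sum>j\<in>S. v j) \<le> real K"
proof -
  have sub: "S \<subseteq> {1..N}" "card S \<le> K" using assort_facts[OF assms(1)] by auto
  have vb: "\<forall>j\<in>S. 0 \<le> v j \<and> v j \<le> 1" using sub assms(2) by (auto simp: cube_def)
  show "0 \<le> (\<Sum>j\<in>S. v j)" using vb by (auto intro: sum_nonneg)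
  have "(\<Sum>j\<in>S. v j) \<le> (\<Sum>j\<in>S. 1)" using vb by (intro sum_mono) auto
  also have "\<dots> = real (card S)" by simp
  also have "\<dots> \<le> real K" using sub by simp
  finally show "(\<Sum>j\<in>S. v j) \<le> real K" .
qed

lemma dv_S:
  assumes "S \<in> assortments N K" "i \<in> S" "v \<in> cube N" "v' \<in> cube N"
  shows "(v i - v' i)^2 \<le> 2 * (real K + 1)^2 *
           ((mnl_mu S v i - mnl_mu S v' i)^2 + (mnl_mu S v 0 - mnl_mu S v' 0)^2)"
proof -
  have i0: "i \<noteq> 0" using assms assort_facts(5)[OF assms(1)] by metis
  have iN: "i \<in> {1..N}" using assms assort_facts(1)[OF assms(1)] by auto
  have y: "0 \<le> v' i" "v' i \<le> 1" using assms(4) iN by (auto simp: cube_def)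
  note b1 = sum_v_bound[OF assms(1) assms(3)]
  note b2 = sum_v_bound[OF assms(1) assms(4)]
  have "(v i - v' i)^2 \<le> 2 * (real K + 1)^2 * ((v i/(1 + (\<Sum>j\<in>S. v j)) - v' i/(1 + (\<Sum>j\<in>S. v' j)))^2
       + (1/(1 + (\<Sum>j\<in>S. v j)) - 1/(1 + (\<Sum>j\<in>S. v' j)))^2)"
    by (rule dv_generic) (use b1 b2 y in auto)
  thus ?thesis unfolding mnl_mu_def using i0 assms(2) by simp
qed

lemma sumS:
  assumes "S \<in> assortments N K" "S' \<in> assortments N K" "v \<in> cube N" "v' \<in> cube N"
  shows "(\<Sum>i\<in>S \<inter> S'. (v i - v' i)^2) \<le> 2 * (real K + 1)^3 * mu_dist2 N S v v'"
proof -
  define D where "D i = (mnl_mu S v i - mnl_mu S v' i)^2" for i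
  have fS: "finite S" "S \<subseteq> {1..N}" "card S \<le> K" "0 \<notin> S" using assort_facts[OF assms(1)] by auto
  have fI: "finite (S \<inter> S')" using fS by auto
  have cI: "card (S \<inter> S') \<le> K" using fS card_mono[OF fS(1), of "S \<inter> S'"] by auto
  have "(\<Sum>i\<in>S \<inter> S'. (v i - v' i)^2) \<le> (\<Sum>i\<in>S \<inter> S'. 2 * (real K + 1)^2 * (D i + D 0))"
    unfolding D_def by (intro sum_mono dv_S[OF assms(1) _ assms(3,4)]) auto
  also have "\<dots> = 2 * (real K + 1)^2 * ((\<Sum>i\<in>S \<inter> S'. D i) + real (card (S \<inter> S')) * D 0)"
    by (simp add: sum_distrib_left[symmetric] sum.distrib sum_distrib_right[symmetric] algebra_simps)
  also have "\<dots> \<le> 2 * (real K + 1)^2 * ((real K + 1) * ((\<Sum>i\<in>S \<inter> S'. D i) + D 0))"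
  proof (intro mult_left_mono)
    have D0: "D 0 \<ge> 0" "(\<Sum>i\<in>S \<inter> S'. D i) \<ge> 0" unfolding D_def by (auto intro: sum_nonneg)
    have "real (card (S \<inter> S')) * D 0 \<le> (real K + 1) * D 0" using cI D0 by (intro mult_right_mono) auto
    moreover have "1 * (\<Sum>i\<in>S \<inter> S'. D i) \<le> (real K + 1) * (\<Sum>i\<in>S \<inter> S'. D i)" using D0 by (intro mult_right_mono) auto
    ultimately show "(\<Sum>i\<in>S \<inter> S'. D i) + real (card (S \<inter> S')) * D 0 \<le> (real K + 1) * ((\<Sum>i\<in>S \<inter> S'. D i) + D 0)"
      by (simp add: algebra_simps)
  qed simp
  also have "\<dots> \<le> 2 * (real K + 1)^2 * ((real K + 1) * mu_dist2 N S v v')"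
  proof (intro mult_left_mono)
    have "(\<Sum>i\<in>S \<inter> S'. D i) + D 0 = (\<Sum>i\<in>insert 0 (S \<inter> S'). D i)" using fI fS by simp
    also have "\<dots> \<le> (\<Sum>i\<in>{0..N}. D i)"
      by (rule sum_mono2) (use fS in \<open>auto simp: D_def\<close>)
    also have "(\<Sum>i\<in>{0..N}. D i) = mu_dist2 N S v v'" unfolding D_def mu_dist2_def ..
    finally show "(\<Sum>i\<in>S \<inter> S'. D i) + D 0 \<le> mu_dist2 N S v v'" .
  qed auto
  also have "\<dots> = 2 * (real K + 1)^3 * mu_dist2 N S v v'" by (simp add: power2_eq_square power3_eq_cube)
  finally show ?thesis .
qed

lemma R_mu:
  assumes "S \<in> assortments N K"
  shows "mnl_R S v r = (\<Sum>i\<in>S. r i * mnl_mu S v i)"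
proof -
  have "0 \<notin> S" using assort_facts[OF assms] by auto
  hence "(\<Sum>i\<in>S. r i * mnl_mu S v i) = (\<Sum>i\<in>S. r i * v i / (1 + (\<Sum>j\<in>S. v j)))"
    unfolding mnl_mu_def by (intro sum.cong) auto
  thus ?thesis unfolding mnl_R_def by (simp add: sum_divide_distrib)
qed

lemma abs_quad: fixes x c :: real assumes "c > 0" shows "\<bar>x\<bar> \<le> c * x^2 + 1/(4*c)"
proof -
  have "0 \<le> (2*c*\<bar>x\<bar> - 1)^2" by simp
  hence "4*c*\<bar>x\<bar> \<le> 4*c*(c * x^2) + 1" by (simp add: power2_eq_square algebra_simps)
  hence "4*c*\<bar>x\<bar> \<le> 4*c*(c * x^2 + 1/(4*c))" using assms by (simp add: algebra_simps)
  thus ?thesis using assms by simp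
qed

lemma R_diff:
  assumes "S \<in> assortments N K" "r \<in> cube N" "c > 0"
  shows "mnl_R S v r - mnl_R S v' r \<le> c * mu_dist2 N S v v' + real K / (4*c)"
proof -
  have fS: "finite S" "S \<subseteq> {1..N}" "card S \<le> K" using assort_facts[OF assms(1)] by auto
  define D where "D i = mnl_mu S v i - mnl_mu S v' i" for i
  have "mnl_R S v r - mnl_R S v' r = (\<Sum>i\<in>S. r i * D i)"
    unfolding R_mu[OF assms(1)] D_def by (simp add: sum_subtractf[symmetric] algebra_simps)
  also have "\<dots> \<le> (\<Sum>i\<in>S. c * (D i)^2 + 1/(4*c))"
  proof (rule sum_mono)
    fix i assume "i \<in> S"
    hence r: "0 \<le> r i" "r i \<le> 1" using fS assms(2) by (auto simp: cube_def)
    have "r i * D i \<le> \<bar>r i * D i\<bar>" by simp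
    also have "\<dots> = r i * \<bar>D i\<bar>" using r by (simp add: abs_mult)
    also have "\<dots> \<le> 1 * \<bar>D i\<bar>" using r by (intro mult_right_mono) auto
    also have "\<dots> \<le> c * (D i)^2 + 1/(4*c)" using abs_quad[OF assms(3)] by simp
    finally show "r i * D i \<le> c * (D i)^2 + 1/(4*c)" .
  qed
  also have "\<dots> = c * (\<Sum>i\<in>S. (D i)^2) + real (card S) / (4*c)"
    by (simp add: sum.distrib sum_distrib_left)
  also have "\<dots> \<le> c * mu_dist2 N S v v' + real K / (4*c)"
  proof (intro add_mono mult_left_mono)
    show "(\<Sum>i\<in>S. (D i)^2) \<le> mu_dist2 N S v v'"
      unfolding mu_dist2_def D_def by (rule sum_mono2) (use fS in auto)
    show "real (card S) / (4*c) \<le> real K / (4*c)" using fS assms(3) by (intro divide_right_mono) auto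
  qed (use assms in auto)
  finally show ?thesis .
qed


lemma main_bound:
  assumes K1: "1 \<le> K" and KN: "K \<le> N" and g: "\<gamma> > 0" and vc: "v \<in> cube N"
    and rc: "r \<in> cube N" and am: "is_argmax N K \<gamma> v r q"
  shows "dec N K \<gamma> q v r \<le> 40 * real N * real K ^ 4 / \<gamma>"
proof -
  define A where "A = assortments N K"
  define w where "w i = wt N K q i" for i
  define lam where "lam = (real (K+1))^4 / \<gamma>"
  have finA: "finite A" unfolding A_def by (rule finite_assort)
  have qd: "q \<in> dists N K" and wpos: "\<forall>i\<in>{1..N}. w i > 0"
    and opt: "\<forall>\<rho>\<in>dists N K. (\<forall>i\<in>{1..N}. wt N K \<rho> i > 0) \<longrightarrow>
        objective N K \<gamma> v r \<rho> \<le> objective N K \<gamma> v r q"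
    using am unfolding is_argmax_def w_def by auto
  have q0: "\<And>S. q S \<ge> 0" and qout: "\<And>S. S \<notin> A \<Longrightarrow> q S = 0" and qsum: "(\<Sum>S\<in>A. q S) = 1"
    using qd unfolding dists_def A_def by auto
  have wdef: "\<And>i. w i = (\<Sum>S\<in>A. if i \<in> S then q S else 0)"
    unfolding w_def wt_def A_def[symmetric] using finA by (simp add: sum.inter_filter)
  have w1: "\<And>i. w i \<le> 1"
  proof -
    fix i
    have "w i \<le> (\<Sum>S\<in>A. q S)" unfolding wdef using q0 by (intro sum_mono) auto
    thus "w i \<le> 1" using qsum by simp
  qed
  have N1: "N \<ge> 1" using K1 KN by simp
  have ne: "{1..N} \<noteq> {}" using N1 by simp
  have lam0: "lam > 0" unfolding lam_def using g by simp
  have Sfacts: "\<And>S. S \<in> A \<Longrightarrow> S \<subseteq> {1..N} \<and> finite S \<and> card S \<le> K"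
    unfolding A_def using assort_facts by blast

  have foc: "mnl_R S' v r - expect N K q (\<lambda>S. mnl_R S v r) \<le> 2*lam*real N - lam/2 * (\<Sum>i\<in>S'. 1 / w i)"
    if S'A: "S' \<in> A" for S'
  proof -
    have S'sub: "S' \<subseteq> {1..N}" "finite S'" using Sfacts[OF S'A] by auto
    define m where "m = Min (w ` {1..N})"
    have m0: "m > 0" unfolding m_def using wpos ne by (simp add: Min_gr_iff)
    have mle: "\<And>i. i \<in> {1..N} \<Longrightarrow> m \<le> w i" unfolding m_def by (intro Min_le) auto
    have m1: "m \<le> 1" using mle[of 1] w1[of 1] N1 by simp
    define t where "t = m / 4"
    have t0: "t > 0" "t \<le> 1/4" using m0 m1 unfolding t_def by auto
    have tw: "\<And>i. i \<in> {1..N} \<Longrightarrow> t \<le> w i / 4" using mle unfolding t_def by (simp add: divide_right_mono)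
    define \<rho> where "\<rho> S = (1-t) * q S + t * (if S = S' then 1 else 0)" for S
    have rd: "\<rho> \<in> dists N K"
    proof -
      have "\<forall>S. \<rho> S \<ge> 0" unfolding \<rho>_def using t0 q0 by auto
      moreover have "\<forall>S. S \<notin> assortments N K \<longrightarrow> \<rho> S = 0"
        unfolding \<rho>_def using qout S'A A_def by auto
      moreover have "(\<Sum>S\<in>A. \<rho> S) = 1"
        unfolding \<rho>_def using finA S'A qsum
        by (simp add: sum.distrib sum_distrib_left[symmetric] sum.delta)
      ultimately show ?thesis unfolding dists_def A_def by auto
    qed
    have wr: "wt N K \<rho> i = (1-t) * w i + t * (if i \<in> S' then 1 else 0)" for i
    proof -
      have fin: "finite {S\<in>A. i \<in> S}" using finA by simp
      have "wt N K \<rho> i = (\<Sum>S\<in>{S\<in>A. i \<in> S}. (1-t) * q S + t * (if S = S' then 1 else 0))"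
        unfolding wt_def \<rho>_def A_def ..
      also have "\<dots> = (1-t) * w i + t * (if S' \<in> {S\<in>A. i \<in> S} then 1 else 0)"
        unfolding w_def wt_def A_def[symmetric] using fin
        by (simp add: sum.distrib sum_distrib_left[symmetric] sum.delta)
      also have "\<dots> = (1-t) * w i + t * (if i \<in> S' then 1 else 0)" using S'A by simp
      finally show ?thesis .
    qed
    have wrpos: "\<forall>i\<in>{1..N}. wt N K \<rho> i > 0"
    proof
      fix i assume "i \<in> {1..N}"
      hence "(1-t) * w i > 0" using wpos t0 by simp
      thus "wt N K \<rho> i > 0" unfolding wr using t0 by (auto simp: add_pos_nonneg)
    qed
    have obj: "objective N K \<gamma> v r \<rho> \<le> objective N K \<gamma> v r q" using opt rd wrpos by blast
    define E where "E = expect N K q (\<lambda>S. mnl_R S v r)"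
    have Er: "expect N K \<rho> (\<lambda>S. mnl_R S v r) = (1-t) * E + t * mnl_R S' v r"
    proof -
      have "expect N K \<rho> (\<lambda>S. mnl_R S v r) = (\<Sum>S\<in>A. (1-t) * (q S * mnl_R S v r) + t * (if S = S' then mnl_R S v r else 0))"
        unfolding expect_def \<rho>_def A_def[symmetric] by (intro sum.cong) (auto simp: algebra_simps)
      also have "\<dots> = (1-t) * E + t * mnl_R S' v r"
        unfolding E_def expect_def A_def[symmetric] using finA S'A
        by (simp add: sum.distrib sum_distrib_left[symmetric] sum.delta)
      finally show ?thesis .
    qed
    define Lr where "Lr = (\<Sum>i\<in>{1..N}. ln (wt N K \<rho> i))"
    define L where "L = (\<Sum>i\<in>{1..N}. ln (w i))"
    have lnr: "(\<Sum>i\<in>{1..N}. ln (1 / wt N K \<rho> i)) = - Lr"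
      unfolding Lr_def sum_negf[symmetric] using wrpos by (intro sum.cong) (auto simp: ln_div)
    have lnq: "(\<Sum>i\<in>{1..N}. ln (1 / wt N K q i)) = - L"
      unfolding L_def w_def[symmetric] sum_negf[symmetric] using wpos by (intro sum.cong) (auto simp: ln_div)
    have obj2: "(1-t) * E + t * mnl_R S' v r + lam * Lr \<le> E + lam * L"
      using obj unfolding objective_def Er lnr lnq E_def[symmetric] lam_def by simp
    have per: "ln (wt N K \<rho> i) - ln (w i) \<ge> (if i \<in> S' then t / (2 * w i) else 0) - 2*t"
      if iN: "i \<in> {1..N}" for i
    proof (cases "i \<in> S'")
      case True
      have "ln ((1-t) * w i + t) - ln (w i) \<ge> t/(2*w i) - 2*t"
        using ln_step1[of "w i" t] wpos iN w1[of i] t0 tw[OF iN] by auto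
      thus ?thesis unfolding wr using True by simp
    next
      case False
      have "ln ((1-t) * w i) - ln (w i) \<ge> - 2*t"
        using ln_step2[of "w i" t] wpos iN t0 by auto
      thus ?thesis unfolding wr using False by simp
    qed
    have "Lr - L = (\<Sum>i\<in>{1..N}. ln (wt N K \<rho> i) - ln (w i))"
      unfolding Lr_def L_def by (simp add: sum_subtractf)
    also have "\<dots> \<ge> (\<Sum>i\<in>{1..N}. (if i \<in> S' then t / (2 * w i) else 0) - 2*t)"
      by (intro sum_mono per)
    finally have LL: "Lr - L \<ge> (\<Sum>i\<in>{1..N}. (if i \<in> S' then t / (2 * w i) else 0)) - 2*t*real N"
      by (simp add: sum_subtractf mult.commute)
    have "(\<Sum>i\<in>{1..N}. (if i \<in> S' then t / (2 * w i) else 0)) = (\<Sum>i\<in>{i\<in>{1..N}. i \<in> S'}. t / (2 * w i))"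
      by (rule sum.inter_filter[symmetric]) simp
    also have "{i\<in>{1..N}. i \<in> S'} = S'" using S'sub by auto
    also have "(\<Sum>i\<in>S'. t / (2 * w i)) = t/2 * (\<Sum>i\<in>S'. 1 / w i)"
      by (simp add: sum_distrib_left)
    finally have LL2: "Lr - L \<ge> t/2 * (\<Sum>i\<in>S'. 1 / w i) - 2*t*real N" using LL by simp
    have "t * (mnl_R S' v r - E) \<le> lam * (L - Lr)" using obj2 by (simp add: algebra_simps)
    also have "\<dots> \<le> lam * (2*t*real N - t/2 * (\<Sum>i\<in>S'. 1 / w i))"
      using LL2 lam0 by (intro mult_left_mono) auto
    also have "\<dots> = t * (2*lam*real N - lam/2 * (\<Sum>i\<in>S'. 1 / w i))" by (simp add: algebra_simps)
    finally have "t * (mnl_R S' v r - E) \<le> t * (2*lam*real N - lam/2 * (\<Sum>i\<in>S'. 1 / w i))" .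
    thus ?thesis unfolding E_def using t0 by simp
  qed
  have swap: "(\<Sum>i\<in>S'. w i * f i) = (\<Sum>S\<in>A. q S * (\<Sum>i\<in>S \<inter> S'. f i))"
    if "finite S'" for S' and f :: "nat \<Rightarrow> real"
  proof -
    have "(\<Sum>i\<in>S'. w i * f i) = (\<Sum>i\<in>S'. \<Sum>S\<in>A. if i \<in> S then q S * f i else 0)"
      unfolding wdef sum_distrib_right by (intro sum.cong) auto
    also have "\<dots> = (\<Sum>S\<in>A. \<Sum>i\<in>S'. if i \<in> S then q S * f i else 0)" by (rule sum.swap)
    also have "\<dots> = (\<Sum>S\<in>A. q S * (\<Sum>i\<in>S \<inter> S'. f i))"
    proof (rule sum.cong)
      fix S
      have "(\<Sum>i\<in>S'. if i \<in> S then q S * f i else 0) = (\<Sum>i\<in>{i\<in>S'. i \<in> S}. q S * f i)"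
        by (rule sum.inter_filter[symmetric]) fact
      also have "{i\<in>S'. i \<in> S} = S \<inter> S'" by auto
      finally show "(\<Sum>i\<in>S'. if i \<in> S then q S * f i else 0) = q S * (\<Sum>i\<in>S \<inter> S'. f i)"
        by (simp add: sum_distrib_left)
    qed simp
    finally show ?thesis .
  qed
  have bound: "mnl_R S' vs r - expect N K q (\<lambda>S. mnl_R S vs r)
      - \<gamma> * expect N K q (\<lambda>S. mu_dist2 N S v vs) \<le> 40 * real N * real K ^ 4 / \<gamma>"
    if vsc: "vs \<in> cube N" and S'A: "S' \<in> A" for vs S'
  proof -
    have S'f: "S' \<subseteq> {1..N}" "finite S'" using Sfacts[OF S'A] by auto
    define D where "D = expect N K q (\<lambda>S. mu_dist2 N S v vs)"
    define W where "W = (\<Sum>i\<in>S'. 1 / w i)"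
    have D0: "D \<ge> 0" unfolding D_def expect_def mu_dist2_def using q0
      by (intro sum_nonneg mult_nonneg_nonneg) auto
    have W0: "W \<ge> 0" unfolding W_def using wpos S'f by (intro sum_nonneg) (force intro: less_imp_le)
    have h1: "mnl_R S' v r - expect N K q (\<lambda>S. mnl_R S v r) \<le> 2*lam*real N - lam/2 * W"
      unfolding W_def by (rule foc[OF S'A])
    have h2: "mnl_R S' vs r - mnl_R S' v r \<le> (\<Sum>i\<in>S'. \<bar>vs i - v i\<bar>)"
      using S'f vc vsc rc by (intro R_lip) (auto simp: cube_def)
    define a where "a = \<gamma> / (4 * (real K + 1)^3)"
    have a0: "a > 0" unfolding a_def using g by simp
    have "(\<Sum>i\<in>S'. \<bar>vs i - v i\<bar>) \<le> (\<Sum>i\<in>S'. (a * w i) * (v i - vs i)^2 + 1 / (4 * (a * w i)))"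
    proof (rule sum_mono)
      fix i assume "i \<in> S'"
      hence "a * w i > 0" using a0 wpos S'f by auto
      from abs_quad[OF this, of "v i - vs i"]
      show "\<bar>vs i - v i\<bar> \<le> (a * w i) * (v i - vs i)^2 + 1 / (4 * (a * w i))" by (simp add: abs_minus_commute)
    qed
    also have "\<dots> = a * (\<Sum>i\<in>S'. w i * (v i - vs i)^2) + (1/(4*a)) * W"
    proof -
      have e1: "(\<Sum>i\<in>S'. (a * w i) * (v i - vs i)^2) = a * (\<Sum>i\<in>S'. w i * (v i - vs i)^2)"
        by (simp add: sum_distrib_left mult.assoc)
      have e2: "(\<Sum>i\<in>S'. 1 / (4 * (a * w i))) = (1/(4*a)) * W"
        unfolding W_def sum_distrib_left by (intro sum.cong) auto
      show ?thesis unfolding sum.distrib e1 e2 ..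
    qed
    also have "(\<Sum>i\<in>S'. w i * (v i - vs i)^2) = (\<Sum>S\<in>A. q S * (\<Sum>i\<in>S \<inter> S'. (v i - vs i)^2))"
      by (rule swap) (rule S'f)
    also have "\<dots> \<le> (\<Sum>S\<in>A. q S * (2 * (real K + 1)^3 * mu_dist2 N S v vs))"
      using q0 by (intro sum_mono mult_left_mono sumS[OF _ S'A[unfolded A_def] vc vsc]) (auto simp: A_def)
    also have "\<dots> = 2 * (real K + 1)^3 * D"
      unfolding D_def expect_def A_def by (simp add: sum_distrib_left algebra_simps)
    finally have h3': "(\<Sum>i\<in>S'. \<bar>vs i - v i\<bar>) \<le> a * (2 * (real K + 1)^3 * D) + (1/(4*a)) * W"
      using a0 by (simp add: mult_left_mono)
    have h3: "(\<Sum>i\<in>S'. \<bar>vs i - v i\<bar>) \<le> \<gamma>/2 * D + (real K + 1)^3/\<gamma> * W"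
      using h3' g unfolding a_def by (simp add: field_simps)
    have h4: "expect N K q (\<lambda>S. mnl_R S v r) - expect N K q (\<lambda>S. mnl_R S vs r) \<le> \<gamma>/4 * D + real K / \<gamma>"
    proof -
      have "expect N K q (\<lambda>S. mnl_R S v r) - expect N K q (\<lambda>S. mnl_R S vs r)
          = (\<Sum>S\<in>A. q S * (mnl_R S v r - mnl_R S vs r))"
        unfolding expect_def A_def by (simp add: sum_subtractf[symmetric] algebra_simps)
      also have "\<dots> \<le> (\<Sum>S\<in>A. q S * (\<gamma>/4 * mu_dist2 N S v vs + real K / (4 * (\<gamma>/4))))"
        using q0 g by (intro sum_mono mult_left_mono R_diff[OF _ rc]) (auto simp: A_def)
      also have "\<dots> = \<gamma>/4 * D + real K / \<gamma> * (\<Sum>S\<in>A. q S)"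
        unfolding D_def expect_def A_def using g
        by (simp add: sum.distrib sum_distrib_left sum_distrib_right algebra_simps)
      finally show ?thesis using qsum by simp
    qed
    have cmp: "(real K + 1)^3/\<gamma> \<le> lam/2"
    proof -
      have "(real K + 1)^3 * 2 \<le> (real K + 1)^3 * (real K + 1)" using K1 by (intro mult_left_mono) auto
      moreover have "(real K + 1)^3 * (real K + 1) = (real K + 1)^4" by (simp add: eval_nat_numeral)
      ultimately have "(real K + 1)^3 * 2 \<le> (real K + 1)^4" by simp
      thus ?thesis unfolding lam_def using g by (simp add: field_simps)
    qed
    have m1: "(real K + 1)^3/\<gamma> * W \<le> lam/2 * W" using cmp W0 by (rule mult_right_mono)
    have m2: "\<gamma>/2 * D + \<gamma>/4 * D \<le> \<gamma> * D" using D0 g by (simp add: algebra_simps)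
    have tot: "mnl_R S' vs r - expect N K q (\<lambda>S. mnl_R S vs r) - \<gamma> * D \<le> 2*lam*real N + real K / \<gamma>"
      using h1 h2 h3 h4 m1 m2 by linarith
    have fin: "2*lam*real N + real K / \<gamma> \<le> 40 * real N * real K ^ 4 / \<gamma>"
    proof -
      have k1: "real K \<ge> 1" using K1 by simp
      have n1: "real N \<ge> 1" using N1 by simp
      have "(real K + 1)^4 \<le> (2 * real K)^4" using k1 by (intro power_mono) auto
      hence p: "(real K + 1)^4 \<le> 16 * real K^4" by (simp add: power_mult_distrib)
      have "real K \<le> real K ^ 4" using k1 by (simp add: self_le_power)
      also have "\<dots> = 1 * real K^4" by simp
      also have "\<dots> \<le> real N * real K^4" using n1 by (intro mult_right_mono) auto
      finally have q1: "real K \<le> real N * real K^4" .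
      have "2 * (real K + 1)^4 * real N \<le> 2 * (16 * real K^4) * real N" using p n1 by simp
      hence "2 * (real K + 1)^4 * real N + real K \<le> 40 * real N * real K ^ 4" using q1 by (simp add: algebra_simps)
      hence "(2 * (real K + 1)^4 * real N + real K) / \<gamma> \<le> 40 * real N * real K ^ 4 / \<gamma>"
        using g by (intro divide_right_mono) auto
      moreover have "2*lam*real N + real K / \<gamma> = (2 * (real K + 1)^4 * real N + real K) / \<gamma>"
        unfolding lam_def by (simp add: add_divide_distrib add.commute)
      ultimately show ?thesis by simp
    qed
    show ?thesis using tot fin unfolding D_def by linarith
  qed
  have "{1} \<in> A" unfolding A_def assortments_def using N1 K1 by auto
  hence nemp: "cube N \<times> assortments N K \<noteq> {}" using vc unfolding A_def by auto
  show ?thesis unfolding dec_def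
  proof (rule cSUP_least[OF nemp])
    fix p assume "p \<in> cube N \<times> assortments N K"
    then obtain vs S' where p: "p = (vs, S')" "vs \<in> cube N" "S' \<in> A" unfolding A_def by auto
    show "mnl_R (snd p) (fst p) r - expect N K q (\<lambda>S. mnl_R S (fst p) r)
      - \<gamma> * expect N K q (\<lambda>S. mu_dist2 N S v (fst p)) \<le> 40 * real N * real K ^ 4 / \<gamma>"
      using bound[OF p(2,3)] p(1) by simp
  qed
qed


theorem theorem4:
  shows "\<exists>C>0. \<forall>(N::nat) (K::nat) (\<gamma>::real) v r q.
     1 \<le> K \<longrightarrow> K \<le> N \<longrightarrow> \<gamma> > 0 \<longrightarrow> v \<in> cube N \<longrightarrow> r \<in> cube N \<longrightarrow>
     is_argmax N K \<gamma> v r q \<longrightarrow>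
     dec N K \<gamma> q v r \<le> C * real N * real K ^ 4 / \<gamma>"
  by (rule exI[of _ 40]) (auto intro: main_bound)

end
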